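(* Let $d$ be odd and $N = p^4$ for some prime $p \neq 2$. In the coefficient-choosing game of degree $d$ over $\mathbb{Z}/N\mathbb{Z}$, Wanda has a winning strategy (whether she moves first or second).
   Context: The coefficient-choosing game of degree $d$ over $R = \mathbb{Z}/N\mathbb{Z}$: Nora and Wanda alternately choose coefficients of $f(x) = a_d x^d + \cdots + a_0$; on each move the current player picks a not-yet-chosen coefficient and assigns it a value in $R$, subject to $a_d \neq 0$, $a_0 \neq 0$. After all $d+1$ coefficients are chosen, Wanda wins if $f$ has a root in $R$, and Nora wins otherwise. *)

theory Defs
  imports "HOL-Computational_Algebra.Primes"
begin

text \<open>Elements of Z/NZ are represented
by integers in {0..<N}. A position is a partial assignment s of coefficients a_0..a_d
(s i = None means a_i not yet chosen).\<close>

definition legal_move :: "nat \<Rightarrow> int \<Rightarrow> (nat \<Rightarrow> int option) \<Rightarrow> nat \<Rightarrow> int \<Rightarrow> bool" where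
  "legal_move d N s i v \<longleftrightarrow> i \<le> d \<and> s i = None \<and> 0 \<le> v \<and> v < N \<and> ((i = 0 \<or> i = d) \<longrightarrow> v \<noteq> 0)"

definition has_root_mod :: "nat \<Rightarrow> int \<Rightarrow> (nat \<Rightarrow> int option) \<Rightarrow> bool" where
  "has_root_mod d N s \<longleftrightarrow> (\<exists>x. 0 \<le> x \<and> x < N \<and> (\<Sum>i\<le>d. the (s i) * x ^ i) mod N = 0)"

text \<open>wanda_wins k d N s w: with k moves remaining from position s, where w says whether
it is Wanda's turn, Wanda can force a win.\<close>

fun wanda_wins :: "nat \<Rightarrow> nat \<Rightarrow> int \<Rightarrow> (nat \<Rightarrow> int option) \<Rightarrow> bool \<Rightarrow> bool" where
  "wanda_wins 0 d N s w = has_root_mod d N s"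
| "wanda_wins (Suc k) d N s w =
     (if w then (\<exists>i v. legal_move d N s i v \<and> wanda_wins k d N (s(i := Some v)) False)
      else (\<forall>i v. legal_move d N s i v \<longrightarrow> wanda_wins k d N (s(i := Some v)) True))"

definition wanda_has_winning_strategy :: "nat \<Rightarrow> int \<Rightarrow> bool \<Rightarrow> bool" where
  "wanda_has_winning_strategy d N w0 = wanda_wins (Suc d) d N (\<lambda>_. None) w0"

end

theory Submission
  imports Defs "HOL-Number_Theory.Cong"
begin

lemma fin_none: "finite {j. j \<le> d \<and> (s::nat \<Rightarrow> int option) j = None}"
  by (rule finite_subset[of _ "{..d}"]) auto

lemma card_upd:
  fixes s :: "nat \<Rightarrow> int option"
  assumes "i \<le> d" "s i = None"
  shows "card {j. j \<le> d \<and> (s(i := Some v)) j = None} = card {j. j \<le> d \<and> s j = None} - 1"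
proof -
  have "{j. j \<le> d \<and> (s(i := Some v)) j = None} = {j. j \<le> d \<and> s j = None} - {i}" by auto
  thus ?thesis using assms fin_none[of d s] by (simp add: card_Diff_singleton)
qed

lemma poly_cong:
  assumes "[x = y] (mod N)"
  shows "(\<Sum>i\<le>d. c i * x ^ i) mod N = (\<Sum>i\<le>d. c i * y ^ i) mod N"
proof -
  have "[(\<Sum>i\<le>d. c i * x ^ i) = (\<Sum>i\<le>d. c i * y ^ i)] (mod N)"
    by (intro cong_sum cong_mult cong_refl cong_pow assms)
  thus ?thesis by (simp add: cong_def)
qed

lemma trunc:
  fixes x N :: int
  assumes "m \<le> Suc d" "N dvd x ^ m"
  shows "(\<Sum>i\<le>d. c i * x ^ i) mod N = (\<Sum>i<m. c i * x ^ i) mod N"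
proof -
  have e: "{..d} = {..<m} \<union> {m..d}" using assms(1) by auto
  have s: "(\<Sum>i\<le>d. c i * x ^ i) = (\<Sum>i<m. c i * x ^ i) + (\<Sum>i\<in>{m..d}. c i * x ^ i)"
    unfolding e by (rule sum.union_disjoint) auto
  have "N dvd (\<Sum>i\<in>{m..d}. c i * x ^ i)"
  proof (rule dvd_sum)
    fix i assume "i \<in> {m..d}"
    then have "x ^ i = x ^ m * x ^ (i - m)" by (simp add: power_add[symmetric])
    thus "N dvd c i * x ^ i" using assms(2) by simp
  qed
  then obtain k where k: "(\<Sum>i\<in>{m..d}. c i * x ^ i) = N * k" by blast
  have "((\<Sum>i<m. c i * x ^ i) + N * k) mod N = (\<Sum>i<m. c i * x ^ i) mod N" by simp
  thus ?thesis unfolding s k .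
qed

definition Qg :: "nat \<Rightarrow> int \<Rightarrow> (nat \<Rightarrow> int option) \<Rightarrow> bool" where
  "Qg d N s \<longleftrightarrow> (\<forall>c. (\<forall>i\<le>d. s i \<noteq> None \<longrightarrow> s i = Some (c i)) \<longrightarrow>
     (\<exists>x. 0 \<le> x \<and> x < N \<and> (\<Sum>i\<le>d. c i * x ^ i) mod N = 0))"

lemma Qg_upd: "s i = None \<Longrightarrow> Qg d N s \<Longrightarrow> Qg d N (s(i := Some v))"
  unfolding Qg_def
proof (intro allI impI)
  fix c assume n: "s i = None" and q: "\<forall>c. (\<forall>i\<le>d. s i \<noteq> None \<longrightarrow> s i = Some (c i)) \<longrightarrow>
     (\<exists>x. 0 \<le> x \<and> x < N \<and> (\<Sum>i\<le>d. c i * x ^ i) mod N = 0)"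
    and h: "\<forall>j\<le>d. (s(i := Some v)) j \<noteq> None \<longrightarrow> (s(i := Some v)) j = Some (c j)"
  have "\<forall>j\<le>d. s j \<noteq> None \<longrightarrow> s j = Some (c j)"
  proof (intro allI impI)
    fix j assume "j \<le> d" "s j \<noteq> None"
    moreover then have "j \<noteq> i" using n by auto
    ultimately show "s j = Some (c j)" using h by auto
  qed
  thus "\<exists>x. 0 \<le> x \<and> x < N \<and> (\<Sum>i\<le>d. c i * x ^ i) mod N = 0" using q by blast
qed

lemma Qg_win:
  assumes "1 < N"
  shows "card {i. i \<le> d \<and> s i = None} = k \<Longrightarrow> Qg d N s \<Longrightarrow> wanda_wins k d N s w"
proof (induction k arbitrary: s w)
  case (0 s w)
  have "{i. i \<le> d \<and> s i = None} = {}" using 0(1) fin_none[of d s] by (simp only: card_0_eq)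
  hence "\<forall>i\<le>d. s i \<noteq> None" unfolding Collect_empty_eq by simp
  then have "\<forall>i\<le>d. s i \<noteq> None \<longrightarrow> s i = Some (the (s i))" by auto
  then have "\<exists>x. 0 \<le> x \<and> x < N \<and> (\<Sum>i\<le>d. the (s i) * x ^ i) mod N = 0"
    using 0(2)[unfolded Qg_def, THEN spec[of _ "\<lambda>i. the (s i)"]] by simp
  thus ?case by (simp only: wanda_wins.simps has_root_mod_def)
next
  case (Suc k s w)
  show ?case
  proof (cases w)
    case True
    have "{i. i \<le> d \<and> s i = None} \<noteq> {}" using Suc.prems(1) by (metis card.empty nat.distinct(1))
    then obtain i where i: "i \<le> d" "s i = None" by blast
    have l: "legal_move d N s i 1" using i assms by (simp add: legal_move_def)
    have c: "card {j. j \<le> d \<and> (s(i := Some 1)) j = None} = k"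
      using card_upd[of i d s 1, OF i] Suc.prems(1) by simp
    have "wanda_wins k d N (s(i := Some 1)) False"
      by (rule Suc.IH[OF c Qg_upd[OF i(2) Suc.prems(2)]])
    hence "\<exists>i v. legal_move d N s i v \<and> wanda_wins k d N (s(i := Some v)) False" using l by blast
    thus ?thesis using True by simp
  next
    case False
    have "\<forall>i v. legal_move d N s i v \<longrightarrow> wanda_wins k d N (s(i := Some v)) True"
    proof (intro allI impI)
      fix i v assume "legal_move d N s i v"
      hence i: "i \<le> d" "s i = None" by (auto simp: legal_move_def)
      have c: "card {j. j \<le> d \<and> (s(i := Some v)) j = None} = k"
        using card_upd[of i d s v, OF i] Suc.prems(1) by simp
      show "wanda_wins k d N (s(i := Some v)) True"
        by (rule Suc.IH[OF c Qg_upd[OF i(2) Suc.prems(2)]])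
    qed
    thus ?thesis using False by simp
  qed
qed


definition partner :: "nat \<Rightarrow> nat \<Rightarrow> nat" where
  "partner d i = (if i = 0 then d else if i = d then 0 else if odd i then i + 1 else i - 1)"

lemma partner_le: "odd d \<Longrightarrow> i \<le> d \<Longrightarrow> partner d i \<le> d"
  unfolding partner_def by (auto elim!: oddE)

lemma partner_inv: "odd d \<Longrightarrow> i \<le> d \<Longrightarrow> partner d (partner d i) = i"
  unfolding partner_def by (auto elim!: oddE evenE)

lemma partner_ne: "odd d \<Longrightarrow> i \<le> d \<Longrightarrow> partner d i \<noteq> i"
  unfolding partner_def by (auto elim!: oddE)

lemma partner_sign: "odd d \<Longrightarrow> i \<le> d \<Longrightarrow> (-1::int) ^ (partner d i) = - ((-1) ^ i)"
  unfolding partner_def by (auto elim!: oddE evenE)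

lemma alt_sum_zero:
  fixes a :: "nat \<Rightarrow> int"
  assumes d: "odd d" and a: "\<forall>i\<le>d. a (partner d i) = a i"
  shows "(\<Sum>i\<le>d. a i * (-1) ^ i) = 0"
proof -
  have "(\<Sum>i\<le>d. a i * (-1) ^ i) = (\<Sum>i\<le>d. a (partner d i) * (-1) ^ (partner d i))"
    by (rule sum.reindex_bij_witness[of _ "partner d" "partner d"])
       (auto simp: partner_inv[OF d] partner_le[OF d])
  also have "\<dots> = (\<Sum>i\<le>d. - (a i * (-1) ^ i))"
    by (rule sum.cong) (auto simp: a partner_sign[OF d])
  also have "\<dots> = - (\<Sum>i\<le>d. a i * (-1) ^ i)" by (simp add: sum_negf)
  finally show ?thesis by simp
qed

definition validst :: "nat \<Rightarrow> int \<Rightarrow> (nat \<Rightarrow> int option) \<Rightarrow> bool" where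
  "validst d N s \<longleftrightarrow> (\<forall>i\<le>d. \<forall>v. s i = Some v \<longrightarrow> 0 \<le> v \<and> v < N \<and> ((i = 0 \<or> i = d) \<longrightarrow> v \<noteq> 0))"

definition PN :: "nat \<Rightarrow> (nat \<Rightarrow> int option) \<Rightarrow> bool" where
  "PN d s \<longleftrightarrow> (\<forall>i\<le>d. s (partner d i) = s i)"

definition PW :: "nat \<Rightarrow> (nat \<Rightarrow> int option) \<Rightarrow> bool" where
  "PW d s \<longleftrightarrow> (\<exists>j\<le>d. s j \<noteq> None \<and> s (partner d j) = None \<and>
      (\<forall>i\<le>d. i \<noteq> j \<and> i \<noteq> partner d j \<longrightarrow> s (partner d i) = s i))"

lemma pair_win:
  assumes d: "odd d" and N: "0 < N"
  shows "card {i. i \<le> d \<and> s i = None} = k \<Longrightarrow> validst d N s \<Longrightarrow>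
    (if w then PW d s else PN d s) \<Longrightarrow> wanda_wins k d N s w"
proof (induction k arbitrary: s w)
  case (0 s w)
  have "{i. i \<le> d \<and> s i = None} = {}" using 0(1) fin_none[of d s] by (simp only: card_0_eq)
  hence all: "\<forall>i\<le>d. s i \<noteq> None" unfolding Collect_empty_eq by simp
  have nw: "\<not> w"
  proof
    assume w
    then obtain j where "j \<le> d" "s (partner d j) = None" using 0(3) unfolding PW_def by auto
    thus False using all partner_le[OF d] by blast
  qed
  hence pn: "PN d s" using 0(3) by simp
  define a where "a = (\<lambda>i. the (s i))"
  have "\<forall>i\<le>d. a (partner d i) = a i" using pn unfolding PN_def a_def by simp
  hence z: "(\<Sum>i\<le>d. a i * (-1) ^ i) = 0" by (rule alt_sum_zero[OF d])
  have "[N - 1 = -1] (mod N)" by (simp add: cong_def)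
  hence "(\<Sum>i\<le>d. a i * (N - 1) ^ i) mod N = (\<Sum>i\<le>d. a i * (-1) ^ i) mod N"
    by (rule poly_cong)
  hence "(\<Sum>i\<le>d. a i * (N - 1) ^ i) mod N = 0" using z by simp
  hence "has_root_mod d N s" unfolding has_root_mod_def a_def using N
    by (intro exI[of _ "N - 1"]) simp
  thus ?case by simp
next
  case (Suc k s w)
  show ?case
  proof (cases w)
    case True
    then obtain j where j: "j \<le> d" "s j \<noteq> None" "s (partner d j) = None"
      and oth: "\<forall>i\<le>d. i \<noteq> j \<and> i \<noteq> partner d j \<longrightarrow> s (partner d i) = s i"
      using Suc.prems(3) unfolding PW_def by auto
    obtain v where v: "s j = Some v" using j(2) by auto
    define pj where "pj = partner d j"
    have pj: "pj \<le> d" "s pj = None" "partner d pj = j" "pj \<noteq> j"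
      using j partner_le[OF d] partner_inv[OF d] partner_ne[OF d] unfolding pj_def by auto
    have vv: "0 \<le> v" "v < N" "(j = 0 \<or> j = d) \<longrightarrow> v \<noteq> 0"
      using Suc.prems(2) j(1) v unfolding validst_def by auto
    have "pj = 0 \<Longrightarrow> j = d" "pj = d \<Longrightarrow> j = 0"
      using pj(3) unfolding partner_def by auto
    hence l: "legal_move d N s pj v" using pj vv unfolding legal_move_def by auto
    have c: "card {i. i \<le> d \<and> (s(pj := Some v)) i = None} = k"
      using card_upd[of pj d s v, OF pj(1,2)] Suc.prems(1) by simp
    have val: "validst d N (s(pj := Some v))"
      using Suc.prems(2) l unfolding validst_def legal_move_def by auto
    have pn: "PN d (s(pj := Some v))"
      unfolding PN_def
    proof (intro allI impI)
      fix i assume i: "i \<le> d"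
      show "(s(pj := Some v)) (partner d i) = (s(pj := Some v)) i"
      proof (cases "i = j \<or> i = pj")
        case True
        thus ?thesis using pj v pj_def by auto
      next
        case False
        have "partner d i \<noteq> pj" "partner d i \<noteq> j"
          using False partner_inv[OF d i] pj(3) pj_def by metis+
        thus ?thesis using False oth i pj_def by auto
      qed
    qed
    have "wanda_wins k d N (s(pj := Some v)) False"
      by (rule Suc.IH[OF c val]) (simp add: pn)
    thus ?thesis using l True by auto
  next
    case False
    hence pn: "PN d s" using Suc.prems(3) by simp
    have "\<forall>i v. legal_move d N s i v \<longrightarrow> wanda_wins k d N (s(i := Some v)) True"
    proof (intro allI impI)
      fix i v assume l: "legal_move d N s i v"
      hence i: "i \<le> d" "s i = None" by (auto simp: legal_move_def)
      have c: "card {j. j \<le> d \<and> (s(i := Some v)) j = None} = k"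
        using card_upd[of i d s v, OF i] Suc.prems(1) by simp
      have val: "validst d N (s(i := Some v))"
        using Suc.prems(2) l unfolding validst_def legal_move_def by auto
      have pi: "partner d i \<le> d" "partner d i \<noteq> i" "partner d (partner d i) = i"
        using partner_le[OF d i(1)] partner_ne[OF d i(1)] partner_inv[OF d i(1)] by auto
      have pw: "PW d (s(i := Some v))"
        unfolding PW_def
      proof (intro exI[of _ i] conjI allI impI)
        show "i \<le> d" by fact
        show "(s(i := Some v)) i \<noteq> None" by simp
        show "(s(i := Some v)) (partner d i) = None" using pn i pi unfolding PN_def by auto
        fix i' assume i': "i' \<le> d" "i' \<noteq> i \<and> i' \<noteq> partner d i"
        have "partner d i' \<noteq> i" "partner d i' \<noteq> partner d i"
          using i' partner_inv[OF d i'(1)] pi(3) by metis+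
        thus "(s(i := Some v)) (partner d i') = (s(i := Some v)) i'"
          using i' pn unfolding PN_def by auto
      qed
      show "wanda_wins k d N (s(i := Some v)) True"
        by (rule Suc.IH[OF c val]) (simp add: pw)
    qed
    thus ?thesis using False by simp
  qed
qed


lemma root_from:
  fixes N y :: int
  assumes "0 < N" "m \<le> Suc d" "N dvd y ^ m" "N dvd (\<Sum>i<m. c i * y ^ i)"
  shows "\<exists>x. 0 \<le> x \<and> x < N \<and> (\<Sum>i\<le>d. c i * x ^ i) mod N = 0"
proof (intro exI conjI)
  show "0 \<le> y mod N" "y mod N < N" using assms(1) by auto
  have "[y mod N = y] (mod N)" by (simp add: cong_def)
  hence "(\<Sum>i\<le>d. c i * (y mod N) ^ i) mod N = (\<Sum>i\<le>d. c i * y ^ i) mod N" by (rule poly_cong)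
  also have "\<dots> = (\<Sum>i<m. c i * y ^ i) mod N" by (rule trunc[OF assms(2,3)])
  also have "\<dots> = 0" using assms(4) by simp
  finally show "(\<Sum>i\<le>d. c i * (y mod N) ^ i) mod N = 0" .
qed

lemma sum2: "(\<Sum>i::nat<2. f i) = f 0 + (f 1 :: int)"
  by (simp add: eval_nat_numeral)

lemma sum4: "(\<Sum>i::nat<4. f i) = f 0 + f 1 + f 2 + (f 3 :: int)"
  by (simp add: eval_nat_numeral)

lemma rootA:
  fixes p N :: int
  assumes "N = p ^ 4" "p > 1" "1 \<le> d" "c 0 = p ^ 2" "c 1 = 1"
  shows "\<exists>x. 0 \<le> x \<and> x < N \<and> (\<Sum>i\<le>d. c i * x ^ i) mod N = 0"
proof (rule root_from[where m = 2 and y = "- (p ^ 2)"])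
  show "0 < N" using assms by simp
  show "2 \<le> Suc d" using assms by simp
  show "N dvd (- (p ^ 2)) ^ 2" using assms by (simp add: power_mult[symmetric])
  show "N dvd (\<Sum>i<2. c i * (- (p ^ 2)) ^ i)" using assms by (simp add: sum2)
qed

lemma rootB1:
  fixes p N v :: int
  assumes "N = p ^ 4" "prime p" "1 \<le> d" "c 0 = p ^ 2" "c 1 = v" "\<not> p dvd v"
  shows "\<exists>x. 0 \<le> x \<and> x < N \<and> (\<Sum>i\<le>d. c i * x ^ i) mod N = 0"
proof -
  have "coprime v (p ^ 2)" using assms(2,6) prime_imp_coprime by (simp add: ac_simps)
  then obtain y where "[v * y = 1] (mod p ^ 2)" using cong_solve_coprime_int by blast
  then have "p ^ 2 dvd 1 - v * y" by (metis cong_iff_dvd_diff cong_sym)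
  then obtain m where m: "1 - v * y = p ^ 2 * m" by blast
  have p1: "p > 1" using assms(2) prime_gt_1_int by blast
  show ?thesis
  proof (rule root_from[where m = 2 and y = "p ^ 2 * (- y)"])
    show "0 < N" using assms p1 by simp
    show "2 \<le> Suc d" using assms by simp
    show "N dvd (p ^ 2 * (- y)) ^ 2" using assms
      by (simp add: power_mult_distrib power_mult[symmetric])
    have "(\<Sum>i<2. c i * (p ^ 2 * (- y)) ^ i) = p ^ 2 * (1 - v * y)"
      using assms by (simp add: sum2 algebra_simps)
    also have "\<dots> = p ^ 2 * (p ^ 2 * m)" using m by simp
    also have "\<dots> = N * m" using assms by (simp add: eval_nat_numeral)
    finally show "N dvd (\<Sum>i<2. c i * (p ^ 2 * (- y)) ^ i)" by simp
  qed
qed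

lemma rootB2:
  fixes p N u :: int
  assumes "N = p ^ 4" "prime p" "3 \<le> d" "c 0 = p ^ 2" "c 1 = p * u" "\<not> p dvd u" "c 2 = 0"
  shows "\<exists>x. 0 \<le> x \<and> x < N \<and> (\<Sum>i\<le>d. c i * x ^ i) mod N = 0"
proof -
  have "coprime u (p ^ 2)" using assms(2,6) prime_imp_coprime by (simp add: ac_simps)
  then obtain y where "[u * y = 1] (mod p ^ 2)" using cong_solve_coprime_int by blast
  then have "p ^ 2 dvd 1 - u * y" by (metis cong_iff_dvd_diff cong_sym)
  then obtain m where m: "1 - u * y = p ^ 2 * m" by blast
  have p1: "p > 1" using assms(2) prime_gt_1_int by blast
  define t0 where "t0 = - y"
  define c3 where "c3 = c 3"
  define t where "t = t0 + p * c3 * t0 ^ 4"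
  define R where "R = 3 * t0 ^ 2 * (c3 * t0 ^ 4) + 3 * t0 * p * (c3 * t0 ^ 4) ^ 2 + p ^ 2 * (c3 * t0 ^ 4) ^ 3"
  have key: "1 + u * t + p * c3 * t ^ 3 = (1 + p * c3 * t0 ^ 3) * (1 + u * t0) + p ^ 2 * c3 * R"
    unfolding t_def R_def by algebra
  have m2: "1 + u * t0 = p ^ 2 * m" using m unfolding t0_def by simp
  show ?thesis
  proof (rule root_from[where m = 4 and y = "p * t"])
    show "0 < N" using assms p1 by simp
    show "4 \<le> Suc d" using assms by simp
    show "N dvd (p * t) ^ 4" using assms by (simp add: power_mult_distrib)
    have "(\<Sum>i<4. c i * (p * t) ^ i) = p ^ 2 * (1 + u * t + p * c3 * t ^ 3)"
      using assms unfolding c3_def by (simp add: sum4 algebra_simps eval_nat_numeral)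
    also have "\<dots> = N * ((1 + p * c3 * t0 ^ 3) * m + c3 * R)"
      unfolding key m2 using assms by (simp add: algebra_simps eval_nat_numeral)
    finally show "N dvd (\<Sum>i<4. c i * (p * t) ^ i)" by simp
  qed
qed

lemma b3_ident:
  fixes p e c3 s t :: int
  assumes t: "t = 1 + p * s"
  shows "p ^ 2 + p ^ 2 * e * (p * t) + (p ^ 4 - 1) * (p * t) ^ 2 + c3 * (p * t) ^ 3
      = p ^ 4 * (e * s + p ^ 2 * t ^ 2 + c3 * (3 * s + 3 * p * s ^ 2 + p ^ 2 * s ^ 3) - s ^ 2) + p ^ 3 * (e + c3 - 2 * s)"
proof -
  have t2: "t ^ 2 = 1 + p * (2 * s + p * s ^ 2)" unfolding t by (simp add: power2_eq_square algebra_simps)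
  have t3: "t ^ 3 = 1 + p * (3 * s + 3 * p * s ^ 2 + p ^ 2 * s ^ 3)" unfolding t by (simp add: power3_eq_cube power2_eq_square algebra_simps)
  have "p ^ 2 + p ^ 2 * e * (p * t) + (p ^ 4 - 1) * (p * t) ^ 2 + c3 * (p * t) ^ 3
     = p ^ 2 + p ^ 3 * e * t + p ^ 6 * t ^ 2 - p ^ 2 * t ^ 2 + c3 * p ^ 3 * t ^ 3"
    by (simp add: power_mult_distrib eval_nat_numeral algebra_simps)
  also have "\<dots> = p ^ 2 + p ^ 3 * e * (1 + p * s) + p ^ 6 * t ^ 2 - p ^ 2 * (1 + p * (2 * s + p * s ^ 2)) + c3 * p ^ 3 * (1 + p * (3 * s + 3 * p * s ^ 2 + p ^ 2 * s ^ 3))"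
    unfolding t3 by (subst (2) t2) (simp add: t)
  also have "\<dots> = p ^ 4 * (e * s + p ^ 2 * t ^ 2 + c3 * (3 * s + 3 * p * s ^ 2 + p ^ 2 * s ^ 3) - s ^ 2) + p ^ 3 * (e + c3 - 2 * s)"
    by (simp add: eval_nat_numeral algebra_simps)
  finally show ?thesis .
qed

lemma rootB3:
  fixes p N e :: int
  assumes "N = p ^ 4" "prime p" "p \<noteq> 2" "3 \<le> d" "c 0 = p ^ 2" "c 1 = p ^ 2 * e" "c 2 = N - 1"
  shows "\<exists>x. 0 \<le> x \<and> x < N \<and> (\<Sum>i\<le>d. c i * x ^ i) mod N = 0"
proof -
  have p1: "p > 1" using assms(2) prime_gt_1_int by blast
  have "p > 2" using p1 assms(3) by simp
  hence "odd p" using assms(2) prime_odd_int by blast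
  then obtain h where h: "p + 1 = 2 * h" by (metis evenE odd_add odd_one)
  define c3 where "c3 = c 3"
  define s where "s = (e + c3) * h"
  define t where "t = 1 + p * s"
  define K1 where "K1 = e * s + p ^ 2 * t ^ 2 + c3 * (3 * s + 3 * p * s ^ 2 + p ^ 2 * s ^ 3) - s ^ 2"
  have key: "p ^ 2 + p ^ 2 * e * (p * t) + (p ^ 4 - 1) * (p * t) ^ 2 + c3 * (p * t) ^ 3
      = p ^ 4 * K1 + p ^ 3 * (e + c3 - 2 * s)"
    unfolding K1_def by (rule b3_ident[OF t_def])
  have "2 * s = (e + c3) * (2 * h)" by (simp add: s_def ac_simps)
  also have "\<dots> = (e + c3) * (p + 1)" by (simp add: h)
  finally have es0: "2 * s = (e + c3) * (p + 1)" .
  have es: "e + c3 - 2 * s = - ((e + c3) * p)" unfolding es0 by (simp add: algebra_simps)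
  show ?thesis
  proof (rule root_from[where m = 4 and y = "p * t"])
    show "0 < N" using assms p1 by simp
    show "4 \<le> Suc d" using assms by simp
    show "N dvd (p * t) ^ 4" using assms by (simp add: power_mult_distrib)
    have "(\<Sum>i<4. c i * (p * t) ^ i) = p ^ 2 + p ^ 2 * e * (p * t) + (p ^ 4 - 1) * (p * t) ^ 2 + c3 * (p * t) ^ 3"
      using assms unfolding c3_def by (simp add: sum4)
    also have "\<dots> = p ^ 4 * K1 + p ^ 3 * (- ((e + c3) * p))" unfolding key es ..
    also have "\<dots> = N * (K1 - (e + c3))"
      using assms by (simp add: algebra_simps eval_nat_numeral)
    finally show "N dvd (\<Sum>i<4. c i * (p * t) ^ i)" by simp
  qed
qed


lemma rootD1:
  fixes N :: int
  assumes "d = 1" "c 1 = 1" "0 < N"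
  shows "\<exists>x. 0 \<le> x \<and> x < N \<and> (\<Sum>i\<le>d. c i * x ^ i) mod N = 0"
proof (intro exI conjI)
  show "0 \<le> (- c 0) mod N" "(- c 0) mod N < N" using assms(3) by auto
  have "[(- c 0) mod N = - c 0] (mod N)" by (simp add: cong_def)
  hence "(\<Sum>i\<le>d. c i * ((- c 0) mod N) ^ i) mod N = (\<Sum>i\<le>d. c i * (- c 0) ^ i) mod N"
    by (rule poly_cong)
  also have "(\<Sum>i\<le>d. c i * (- c 0) ^ i) = 0" using assms by simp
  finally show "(\<Sum>i\<le>d. c i * ((- c 0) mod N) ^ i) mod N = 0" by simp
qed

theorem lemma8:
  fixes d :: nat and p N :: int
  assumes "odd d" and "prime p" and "p \<noteq> 2" and "N = p ^ 4"
  shows "wanda_has_winning_strategy d N True \<and> wanda_has_winning_strategy d N False"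
proof -
  have p1: "p > 1" using assms(2) prime_gt_1_int by blast
  have p2N: "p ^ 2 < N" using assms(4) p1 by (simp add: power_strict_increasing)
  have p2: "0 < p ^ 2" using p1 by simp
  have N1: "1 < N" using p2N p2 by linarith
  define s0 :: "nat \<Rightarrow> int option" where "s0 = (\<lambda>_. None)"
  have "{i. i \<le> d \<and> s0 i = None} = {..d}" by (auto simp: s0_def)
  hence c0: "card {i. i \<le> d \<and> s0 i = None} = Suc d" by simp
  have part2: "wanda_wins (Suc d) d N s0 False"
    by (rule pair_win[OF assms(1)]) (use N1 c0 in \<open>auto simp: validst_def PN_def s0_def\<close>)
  have part1: "wanda_wins (Suc d) d N s0 True"
  proof (cases "d = 1")
    case True
    have l: "legal_move d N s0 1 1" using True N1 by (simp add: legal_move_def s0_def)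
    have c1: "card {i. i \<le> d \<and> (s0(1 := Some 1)) i = None} = d"
      using card_upd[of 1 d s0 1] c0 True by (simp add: s0_def)
    have q: "Qg d N (s0(1 := Some 1))" unfolding Qg_def
    proof (intro allI impI)
      fix c :: "nat \<Rightarrow> int" assume h: "\<forall>i\<le>d. (s0(1 := Some 1)) i \<noteq> None \<longrightarrow> (s0(1 := Some 1)) i = Some (c i)"
      hence "c 1 = 1" using True by auto
      thus "\<exists>x. 0 \<le> x \<and> x < N \<and> (\<Sum>i\<le>d. c i * x ^ i) mod N = 0"
        using rootD1[OF True] N1 by simp
    qed
    have "wanda_wins d d N (s0(1 := Some 1)) False" by (rule Qg_win[OF N1 c1 q])
    thus ?thesis using l by auto
  next
    case False
    hence "d \<ge> 3" using assms(1) by (auto elim!: oddE)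
    hence "d = Suc (Suc (Suc (d - 3)))" by simp
    then obtain K where dK: "d = Suc (Suc (Suc K))" by blast
    have d13: "1 \<le> d" "3 \<le> d" using dK by simp_all
    have d2: "d \<noteq> 2" using assms(1) by auto
    define s1 where "s1 = s0(0 := Some (p ^ 2))"
    have l0: "legal_move d N s0 0 (p ^ 2)" using p2 p2N by (simp add: legal_move_def s0_def)
    have cs1: "card {i. i \<le> d \<and> s1 i = None} = d"
      using card_upd[of 0 d s0 "p ^ 2"] c0 unfolding s1_def by (simp add: s0_def)
    have W: "\<forall>i v. legal_move d N s1 i v \<longrightarrow> wanda_wins (Suc (Suc K)) d N (s1(i := Some v)) True"
    proof (intro allI impI)
      fix i v assume l: "legal_move d N s1 i v"
      hence i: "i \<le> d" "s1 i = None" "i \<noteq> 0" "0 \<le> v" "v < N"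
        by (auto simp: legal_move_def s1_def split: if_splits)
      define s2 where "s2 = s1(i := Some v)"
      have cs2: "card {j. j \<le> d \<and> s2 j = None} = Suc (Suc K)"
        using card_upd[of i d s1 v, OF i(1,2)] cs1 dK unfolding s2_def by simp
      show "wanda_wins (Suc (Suc K)) d N s2 True"
      proof (cases "i = 1")
        case False
        have l2: "legal_move d N s2 1 1" using False N1 dK by (simp add: legal_move_def s2_def s1_def s0_def)
        define s3 where "s3 = s2(1 := Some 1)"
        have cs3: "card {j. j \<le> d \<and> s3 j = None} = Suc K"
          using card_upd[of 1 d s2 1] cs2 dK False unfolding s3_def by (simp add: s2_def s1_def s0_def)
        have q: "Qg d N s3" unfolding Qg_def
        proof (intro allI impI)
          fix c :: "nat \<Rightarrow> int" assume h: "\<forall>j\<le>d. s3 j \<noteq> None \<longrightarrow> s3 j = Some (c j)"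
          have "s3 0 = Some (p ^ 2)" "s3 1 = Some 1" using i(3) by (auto simp: s3_def s2_def s1_def)
          hence "c 0 = p ^ 2" "c 1 = 1" using h dK by auto
          thus "\<exists>x. 0 \<le> x \<and> x < N \<and> (\<Sum>i\<le>d. c i * x ^ i) mod N = 0"
            using rootA[OF assms(4) p1 d13(1)] by simp
        qed
        have "wanda_wins (Suc K) d N s3 False" by (rule Qg_win[OF N1 cs3 q])
        thus ?thesis using l2 unfolding s3_def by auto
      next
        case True
        define w where "w = (if p ^ 2 dvd v then N - 1 else 0)"
        have l2: "legal_move d N s2 2 w" using True N1 dK d2 unfolding w_def
          by (simp add: legal_move_def s2_def s1_def s0_def)
        define s3 where "s3 = s2(2 := Some w)"
        have cs3: "card {j. j \<le> d \<and> s3 j = None} = Suc K"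
          using card_upd[of 2 d s2 w] cs2 dK True unfolding s3_def by (simp add: s2_def s1_def s0_def)
        have q: "Qg d N s3" unfolding Qg_def
        proof (intro allI impI)
          fix c :: "nat \<Rightarrow> int" assume h: "\<forall>j\<le>d. s3 j \<noteq> None \<longrightarrow> s3 j = Some (c j)"
          have "s3 0 = Some (p ^ 2)" "s3 1 = Some v" "s3 2 = Some w" using True by (auto simp: s3_def s2_def s1_def)
          hence cc: "c 0 = p ^ 2" "c 1 = v" "c 2 = w"
            using h[rule_format, of 0] h[rule_format, of 1] h[rule_format, of 2] d13 by auto
          show "\<exists>x. 0 \<le> x \<and> x < N \<and> (\<Sum>i\<le>d. c i * x ^ i) mod N = 0"
          proof (cases "p dvd v")
            case False
            thus ?thesis using rootB1[of N p d c v, OF assms(4,2) d13(1) cc(1,2)] by simp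
          next
            case pv: True
            then obtain u where u: "v = p * u" by blast
            show ?thesis
            proof (cases "p dvd u")
              case False
              hence "\<not> p ^ 2 dvd v" using u p1 by (simp add: power2_eq_square)
              hence "c 2 = 0" using cc(3) w_def by simp
              moreover have "c 1 = p * u" using cc(2) u by simp
              ultimately show ?thesis using rootB2[of N p d c u, OF assms(4,2) d13(2) cc(1)] False by blast
            next
              case True
              then obtain e where e: "u = p * e" by blast
              hence v2: "v = p ^ 2 * e" using u by (simp add: power2_eq_square)
              hence "c 2 = N - 1" using cc(3) w_def by simp
              moreover have "c 1 = p ^ 2 * e" using cc(2) v2 by simp
              ultimately show ?thesis using rootB3[of N p d c e, OF assms(4,2,3) d13(2) cc(1)] by blast
            qed
          qed
        qed
        have "wanda_wins (Suc K) d N s3 False" by (rule Qg_win[OF N1 cs3 q])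
        thus ?thesis using l2 unfolding s3_def by auto
      qed
    qed
    hence "wanda_wins (Suc (Suc (Suc K))) d N s1 False" by simp
    hence "wanda_wins d d N s1 False" using dK by simp
    thus ?thesis using l0 unfolding s1_def by auto
  qed
  show ?thesis using part1 part2 unfolding wanda_has_winning_strategy_def s0_def by simp
qed

end
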